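(* Let $A=\{0,1\}+3\mathbb{Z}=\{n\in\mathbb{Z}: n\equiv 0 \text{ or } 1 \pmod 3\}$. Then $h(A^2)=8$.
   Context: For a set $X\subseteq\mathbb{R}^d$, the Helly number $h(X)$ is the smallest $h$ such that the following holds: for every finite family $\mathcal{F}$ of convex sets in $\mathbb{R}^d$, if every $h$ or fewer sets of $\mathcal{F}$ have a point of $X$ in their intersection, then the intersection of all sets of $\mathcal{F}$ contains a point of $X$. If no such $h$ exists, $h(X)=\infty$. Equivalently (for discrete $X$), $h(X)$ equals the maximum size of a set $T\subseteq X$ such that $\mathrm{conv}(T)\cap X$ consists only of vertices of $\mathrm{conv}(T)$. *)

theory Defs
  imports "HOL-Analysis.Analysis" "HOL-Library.Extended_Nat"
begin

definition helly_prop :: "'a::real_vector set \<Rightarrow> nat \<Rightarrow> bool" where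
  "helly_prop X h \<longleftrightarrow>
     (\<forall>F. finite F \<and> (\<forall>C\<in>F. convex C) \<and>
          (\<forall>G\<subseteq>F. card G \<le> h \<longrightarrow> \<Inter>G \<inter> X \<noteq> {})
          \<longrightarrow> \<Inter>F \<inter> X \<noteq> {})"

definition helly_number :: "'a::real_vector set \<Rightarrow> enat" where
  "helly_number X = (if \<exists>h. helly_prop X h then enat (LEAST h. helly_prop X h) else \<infinity>)"

definition A01 :: "real set" where
  "A01 = {of_int n | n::int. n mod 3 = 0 \<or> n mod 3 = 1}"

end

theory Submission
  imports Defs
begin


lemma ext_keep:
  fixes B :: "'a::real_vector set"
  assumes "finite B" "p \<notin> convex hull B" "z \<in> convex hull (insert p B)" "z \<noteq> p"
  shows "p \<notin> convex hull (insert z B)"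
proof
  assume h: "p \<in> convex hull (insert z B)"
  have e: "p extreme_point_of convex hull (insert p B)"
    using extreme_point_of_convex_hull_insert assms(1,2) by blast
  have sub: "convex hull (insert z B) \<subseteq> convex hull (insert p B)"
    by (rule hull_minimal) (auto simp: assms(3) hull_inc convex_convex_hull)
  have "p extreme_point_of convex hull (insert z B)"
    using e h sub unfolding extreme_point_of_def by blast
  hence "p \<in> insert z B" by (rule extreme_point_of_convex_hull)
  thus False using assms(2,4) hull_inc by fastforce
qed

lemma descent:
  fixes S :: "'a::real_vector set"
  assumes fin: "\<And>Y. finite Y \<Longrightarrow> finite (S \<inter> convex hull Y)"
    and G2: "\<And>Y. Y \<subseteq> S \<Longrightarrow> finite Y \<Longrightarrow> card Y = n \<Longrightarrow> \<exists>z\<in>S. z \<in> convex hull (Y - {z})"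
  shows "\<forall>Y. Y \<subseteq> S \<and> finite Y \<and> card Y = n \<and> card (S \<inter> convex hull Y) = N
           \<longrightarrow> (\<exists>w\<in>S. \<forall>y\<in>Y. w \<in> convex hull (Y - {y}))"
proof (induction N rule: less_induct)
  case (less N)
  show ?case
  proof (intro allI impI, elim conjE)
    fix Y assume YS: "Y \<subseteq> S" and finY: "finite Y" and cY: "card Y = n"
      and NY: "card (S \<inter> convex hull Y) = N"
    have IH: "\<And>Y'. card (S \<inter> convex hull Y') < N \<Longrightarrow> Y' \<subseteq> S \<Longrightarrow> finite Y' \<Longrightarrow> card Y' = n
                \<Longrightarrow> \<exists>w\<in>S. \<forall>y\<in>Y'. w \<in> convex hull (Y' - {y})"
      using less by blast
    show "\<exists>w\<in>S. \<forall>y\<in>Y. w \<in> convex hull (Y - {y})"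
    proof (cases "\<exists>y\<in>Y. y \<in> convex hull (Y - {y})")
      case True
      then obtain y where yY: "y \<in> Y" and yh: "y \<in> convex hull (Y - {y})" by blast
      have "\<forall>u\<in>Y. y \<in> convex hull (Y - {u})"
      proof
        fix u assume "u \<in> Y"
        show "y \<in> convex hull (Y - {u})"
        proof (cases "u = y")
          case True then show ?thesis using yh by simp
        next
          case False then show ?thesis using yY by (simp add: hull_inc)
        qed
      qed
      then show ?thesis using yY YS by blast
    next
      case False
      hence cp: "\<And>y. y \<in> Y \<Longrightarrow> y \<notin> convex hull (Y - {y})" by blast
      have inner: "\<forall>z. z \<in> S \<longrightarrow> z \<notin> Y \<longrightarrow> z \<in> convex hull Y \<longrightarrow>
                  card {u\<in>Y. z \<notin> convex hull (Y - {u})} = k \<longrightarrow>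
                  (\<exists>w\<in>S. \<forall>y\<in>Y. w \<in> convex hull (Y - {y}))" for k
      proof (induction k rule: less_induct)
        case (less k)
        show ?case
        proof (intro allI impI)
          fix z assume zS: "z \<in> S" and zY: "z \<notin> Y" and zH: "z \<in> convex hull Y"
            and ck: "card {u\<in>Y. z \<notin> convex hull (Y - {u})} = k"
          show "\<exists>w\<in>S. \<forall>y\<in>Y. w \<in> convex hull (Y - {y})"
          proof (cases "{u\<in>Y. z \<notin> convex hull (Y - {u})} = {}")
            case True
            then show ?thesis using zS by blast
          next
            case False
            then obtain p where pY: "p \<in> Y" and pz: "z \<notin> convex hull (Y - {p})" by blast
            define Y' where "Y' = insert z (Y - {p})"
            have Y'S: "Y' \<subseteq> S" using YS zS by (auto simp: Y'_def)
            have finY': "finite Y'" using finY by (simp add: Y'_def)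
            have cY': "card Y' = n"
            proof -
              have "card Y' = Suc (card (Y - {p}))" using zY finY by (simp add: Y'_def)
              also have "\<dots> = card Y" using pY finY card_Diff1_less[OF finY pY]
                by (simp add: card_Diff_singleton)
              finally show ?thesis using cY by simp
            qed
            have hY: "insert p (Y - {p}) = Y" using pY by blast
            have sub: "convex hull Y' \<subseteq> convex hull Y"
              by (rule hull_minimal) (auto simp: Y'_def zH hull_inc convex_convex_hull)
            have pnot: "p \<notin> convex hull Y'"
              unfolding Y'_def
              by (rule ext_keep) (use finY cp[OF pY] zH hY zY pY in auto)
            have lt: "card (S \<inter> convex hull Y') < N"
            proof -
              have "S \<inter> convex hull Y' \<subset> S \<inter> convex hull Y"
                using sub pnot pY YS hull_inc[of p Y] by blast
              then show ?thesis using NY psubset_card_mono[OF fin[OF finY]] by simp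
            qed
            obtain w where wS: "w \<in> S" and wg: "\<forall>y\<in>Y'. w \<in> convex hull (Y' - {y})"
              using IH[OF lt Y'S finY' cY'] by blast
            have Yz: "Y' - {z} = Y - {p}" using zY by (auto simp: Y'_def)
            have wp: "w \<in> convex hull (Y - {p})" using wg Yz by (metis Y'_def insertI1)
            have incl: "{u\<in>Y. w \<notin> convex hull (Y - {u})} \<subseteq> {u\<in>Y. z \<notin> convex hull (Y - {u})} - {p}"
            proof
              fix u assume u: "u \<in> {u\<in>Y. w \<notin> convex hull (Y - {u})}"
              hence uY: "u \<in> Y" and wu: "w \<notin> convex hull (Y - {u})" by auto
              have up: "u \<noteq> p" using wu wp by blast
              have "z \<notin> convex hull (Y - {u})"
              proof
                assume zu: "z \<in> convex hull (Y - {u})"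
                have "u \<in> Y'" using uY up by (simp add: Y'_def)
                hence "w \<in> convex hull (Y' - {u})" using wg by blast
                moreover have "convex hull (Y' - {u}) \<subseteq> convex hull (Y - {u})"
                  by (rule hull_minimal) (auto simp: Y'_def zu hull_inc convex_convex_hull)
                ultimately show False using wu by blast
              qed
              then show "u \<in> {u\<in>Y. z \<notin> convex hull (Y - {u})} - {p}" using uY up by blast
            qed
            have finI: "finite {u\<in>Y. z \<notin> convex hull (Y - {u})}" using finY by simp
            have cw: "card {u\<in>Y. w \<notin> convex hull (Y - {u})} < k"
            proof -
              have "card {u\<in>Y. w \<notin> convex hull (Y - {u})} \<le> card ({u\<in>Y. z \<notin> convex hull (Y - {u})} - {p})"
                by (rule card_mono) (use finI incl in auto)
              also have "\<dots> < k" using ck card_Diff1_less[OF finI] pY pz by simp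
              finally show ?thesis .
            qed
            have wY: "w \<notin> Y"
            proof
              assume wY: "w \<in> Y"
              hence "w \<in> {u\<in>Y. w \<notin> convex hull (Y - {u})}" using cp by blast
              hence wp': "w \<noteq> p" using incl by blast
              hence "w \<in> Y'" using wY by (simp add: Y'_def)
              hence w1: "w \<in> convex hull (Y' - {w})" using wg by blast
              have "convex hull (Y' - {w}) \<subseteq> convex hull (insert z (Y - {w}))"
                by (rule hull_mono) (auto simp: Y'_def)
              hence w2: "w \<in> convex hull (insert z (Y - {w}))" using w1 by blast
              have hw: "insert w (Y - {w}) = Y" using wY by blast
              have "w \<notin> convex hull (insert z (Y - {w}))"
                by (rule ext_keep) (use finY cp[OF wY] zH hw zY wY in auto)
              then show False using w2 by blast
            qed
            have wH: "w \<in> convex hull Y" using wp hull_mono[of "Y - {p}" Y] by blast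
            show ?thesis using less.IH[OF cw] wS wY wH by blast
          qed
        qed
      qed
      obtain z where zS: "z \<in> S" and zh: "z \<in> convex hull (Y - {z})" using G2[OF YS finY cY] by blast
      show ?thesis
      proof (cases "z \<in> Y")
        case True
        then show ?thesis using cp zh by blast
      next
        case False
        then have "Y - {z} = Y" by blast
        then show ?thesis using inner zS False zh by auto
      qed
    qed
  qed
qed



lemma helly_from_indep:
  fixes S :: "'a::real_vector set"
  assumes H: "\<And>Y. Y \<subseteq> S \<Longrightarrow> finite Y \<Longrightarrow> card Y = Suc h \<Longrightarrow> \<exists>w\<in>S. \<forall>y\<in>Y. w \<in> convex hull (Y - {y})"
  shows "helly_prop S h"
  unfolding helly_prop_def
proof (intro allI impI, elim conjE)
  fix F :: "'a set set" assume finF: "finite F" and cvx: "\<forall>C\<in>F. convex C"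
    and sm: "\<forall>G\<subseteq>F. card G \<le> h \<longrightarrow> \<Inter>G \<inter> S \<noteq> {}"
  show "\<Inter>F \<inter> S \<noteq> {}"
  proof
    assume emp: "\<Inter>F \<inter> S = {}"
    obtain G where GF: "G \<subseteq> F" and Ge: "\<Inter>G \<inter> S = {}"
      and Gmin: "\<And>G'. G' \<subseteq> F \<and> \<Inter>G' \<inter> S = {} \<Longrightarrow> card G \<le> card G'"
      using ex_has_least_nat[of "\<lambda>G. G \<subseteq> F \<and> \<Inter>G \<inter> S = {}" F card] emp by blast
    have finG: "finite G" using finF GF finite_subset by blast
    have cardG: "card G > h" using sm GF Ge by (meson not_le)
    have ne: "\<Inter>(G - {C}) \<inter> S \<noteq> {}" if "C \<in> G" for C
    proof
      assume "\<Inter>(G - {C}) \<inter> S = {}"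
      hence "card G \<le> card (G - {C})" using Gmin GF by blast
      thus False using card_Diff1_less[OF finG that] by simp
    qed
    define x where "x C = (SOME p. p \<in> \<Inter>(G - {C}) \<inter> S)" for C
    have xp: "x C \<in> \<Inter>(G - {C}) \<inter> S" if "C \<in> G" for C
      unfolding x_def using ne[OF that] by (metis ex_in_conv someI_ex)
    have xn: "x C \<notin> C" if "C \<in> G" for C
    proof
      assume "x C \<in> C"
      hence "x C \<in> \<Inter>G \<inter> S" using xp[OF that] by blast
      thus False using Ge by blast
    qed
    have inj: "inj_on x G"
    proof (rule inj_onI)
      fix C D assume C: "C \<in> G" and D: "D \<in> G" and eq: "x C = x D"
      show "C = D"
      proof (rule ccontr)
        assume "C \<noteq> D"
        hence "x D \<in> C" using xp[OF D] C by blast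
        thus False using xn[OF C] eq by simp
      qed
    qed
    have "card (x ` G) = card G" using card_image[OF inj] .
    hence "Suc h \<le> card (x ` G)" using cardG by simp
    then obtain Y where YG: "Y \<subseteq> x ` G" and cY: "card Y = Suc h" and finY: "finite Y"
      by (rule obtain_subset_with_card_n)
    have YS: "Y \<subseteq> S" using YG xp by blast
    obtain w where wS: "w \<in> S" and wY: "\<forall>y\<in>Y. w \<in> convex hull (Y - {y})"
      using H[OF YS finY cY] by blast
    have "w \<in> C" if C: "C \<in> G" for C
    proof -
      have subC: "x ` (G - {C}) \<subseteq> C" using xp C by blast
      have cC: "convex C" using cvx C GF by blast
      show ?thesis
      proof (cases "x C \<in> Y")
        case True
        have "Y - {x C} \<subseteq> x ` (G - {C})" using YG by blast
        hence "convex hull (Y - {x C}) \<subseteq> C" using subC cC by (meson hull_minimal order_trans)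
        then show ?thesis using wY True by blast
      next
        case False
        obtain y where yY: "y \<in> Y" using cY by (metis card.empty ex_in_conv nat.distinct(1))
        have "Y - {y} \<subseteq> x ` (G - {C})" using YG False by blast
        hence "convex hull (Y - {y}) \<subseteq> C" using subC cC by (meson hull_minimal order_trans)
        then show ?thesis using wY yY by blast
      qed
    qed
    hence "w \<in> \<Inter>G \<inter> S" using wS by blast
    thus False using Ge by blast
  qed
qed

lemma helly_mono: "helly_prop X h \<Longrightarrow> h \<le> h' \<Longrightarrow> helly_prop X h'"
  unfolding helly_prop_def by (meson order_trans)



lemma A01_int: "(of_int k :: real) \<in> A01 \<longleftrightarrow> k mod 3 = 0 \<or> k mod 3 = 1"
  unfolding A01_def by auto

lemma A01_elim: "x \<in> A01 \<Longrightarrow> \<exists>k. x = of_int k \<and> (k mod 3 = 0 \<or> k mod 3 = 1)"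
  unfolding A01_def by auto

lemma fin_S: "finite Y \<Longrightarrow> finite ((A01 \<times> A01) \<inter> convex hull Y)"
proof -
  assume fY: "finite Y"
  have "bounded (convex hull Y)" using finite_imp_compact_convex_hull[OF fY] compact_imp_bounded by blast
  then obtain r where r: "\<And>x. x \<in> convex hull Y \<Longrightarrow> norm x \<le> r" unfolding bounded_iff by blast
  define R where "R = ceiling r"
  have "(A01 \<times> A01) \<inter> convex hull Y \<subseteq> (\<lambda>(m,n). (real_of_int m, real_of_int n)) ` ({-R..R} \<times> {-R..R})"
  proof
    fix p assume p: "p \<in> (A01 \<times> A01) \<inter> convex hull Y"
    obtain a b where pab: "p = (a,b)" by (cases p)
    obtain m where m: "a = of_int m" using p pab A01_elim by blast
    obtain n where n: "b = of_int n" using p pab A01_elim by blast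
    have nr: "norm (a,b) \<le> r" using r p pab by blast
    have "\<bar>of_int m\<bar> \<le> r" using norm_fst_le[of a b] nr m by simp
    hence "real_of_int \<bar>m\<bar> \<le> real_of_int R" unfolding R_def using le_of_int_ceiling[of r] by linarith
    hence m': "\<bar>m\<bar> \<le> R" by linarith
    have "\<bar>of_int n\<bar> \<le> r" using norm_snd_le[where x=a and y=b] nr n by simp
    hence "real_of_int \<bar>n\<bar> \<le> real_of_int R" unfolding R_def using le_of_int_ceiling[of r] by linarith
    hence n': "\<bar>n\<bar> \<le> R" by linarith
    show "p \<in> (\<lambda>(m,n). (real_of_int m, real_of_int n)) ` ({-R..R} \<times> {-R..R})"
      using m' n' by (auto simp: pab m n image_iff intro!: bexI[of _ "(m,n)"])
  qed
  moreover have "finite ((\<lambda>(m,n). (real_of_int m, real_of_int n)) ` ({-R..R} \<times> {-R..R}))" by simp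
  ultimately show ?thesis by (rule finite_subset)
qed

lemma key0: fixes r s d e d' e' :: int
  assumes "r = 0 \<or> r = 1" "s = 0 \<or> s = 1" "d = 0 \<or> d = 1 \<or> d = 2" "e = 0 \<or> e = 1 \<or> e = 2"
   "d' = 0 \<or> d' = 1 \<or> d' = 2" "e' = 0 \<or> e' = 1 \<or> e' = 2"
  shows "((r+d) mod 3 \<le> 1 \<and> (s+d') mod 3 \<le> 1) \<or>
         ((r-d) mod 3 \<le> 1 \<and> (s-d') mod 3 \<le> 1) \<or>
         ((r+e) mod 3 \<le> 1 \<and> (s+e') mod 3 \<le> 1) \<or>
         ((r-e) mod 3 \<le> 1 \<and> (s-e') mod 3 \<le> 1) \<or>
         ((r+e-d) mod 3 \<le> 1 \<and> (s+e'-d') mod 3 \<le> 1) \<or>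
         ((r+d-e) mod 3 \<le> 1 \<and> (s+d'-e') mod 3 \<le> 1) \<or>
         ((r+d+e) mod 3 \<le> 1 \<and> (s+d'+e') mod 3 \<le> 1)"
  using assms by (elim disjE) simp_all

lemma m3: "(x::int) mod 3 = 0 \<or> x mod 3 = 1 \<or> x mod 3 = 2" by presburger

lemma key1: fixes r s d e d' e' :: int
  assumes "r = 0 \<or> r = 1" "s = 0 \<or> s = 1"
  shows "((r+d) mod 3 \<le> 1 \<and> (s+d') mod 3 \<le> 1) \<or>
         ((r-d) mod 3 \<le> 1 \<and> (s-d') mod 3 \<le> 1) \<or>
         ((r+e) mod 3 \<le> 1 \<and> (s+e') mod 3 \<le> 1) \<or>
         ((r-e) mod 3 \<le> 1 \<and> (s-e') mod 3 \<le> 1) \<or>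
         ((r+e-d) mod 3 \<le> 1 \<and> (s+e'-d') mod 3 \<le> 1) \<or>
         ((r+d-e) mod 3 \<le> 1 \<and> (s+d'-e') mod 3 \<le> 1) \<or>
         ((r+d+e) mod 3 \<le> 1 \<and> (s+d'+e') mod 3 \<le> 1)"
proof -
  have eq: "\<And>a b. (a + b mod 3) mod 3 = (a + b) mod (3::int)"
     "\<And>a b. (a - b mod 3) mod 3 = (a - b) mod (3::int)"
     "\<And>a b c. (a + b mod 3 - c mod 3) mod 3 = (a + b - c) mod (3::int)"
     "\<And>a b c. (a + b mod 3 + c mod 3) mod 3 = (a + b + c) mod (3::int)"
     "\<And>a b c. (a + b mod 3 - c) mod 3 = (a + b - c) mod (3::int)"
     "\<And>a b c. (a + b mod 3 + c) mod 3 = (a + b + c) mod (3::int)"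
    by (intro mod_diff_cong mod_add_cong; simp)+
  show ?thesis
    using key0[OF assms m3[of d] m3[of e] m3[of d'] m3[of e']]
    unfolding eq .
qed

lemma sc3: "3 *\<^sub>R (x::'a::real_vector) = 2 *\<^sub>R x + x"
proof -
  have "3 *\<^sub>R x = (2 + 1) *\<^sub>R x" by simp
  also have "\<dots> = 2 *\<^sub>R x + x" by (simp only: scaleR_left_distrib scaleR_one)
  finally show ?thesis .
qed

lemma sc3': "3 *\<^sub>R (x::'a::real_vector) = x + y \<Longrightarrow> 2 *\<^sub>R x = y"
  using sc3[of x] by (simp add: add.commute)

lemma tri_ok:
  fixes p q :: "'a::real_vector"
  assumes "p \<in> Y" "q \<in> Y" "p \<noteq> q" "(2/3) *\<^sub>R p + (1/3) *\<^sub>R q \<in> S"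
  shows "\<exists>z\<in>S. z \<in> convex hull (Y - {z})"
proof -
  define z where "z = (2/3) *\<^sub>R p + (1/3) *\<^sub>R q"
  have h3: "3 *\<^sub>R z = 2 *\<^sub>R p + q" unfolding z_def by (simp add: scaleR_add_right)
  have zp: "z \<noteq> p"
  proof
    assume "z = p"
    hence "2 *\<^sub>R p + q = 2 *\<^sub>R p + p" using h3 sc3[of p] by simp
    hence "q = p" by simp
    thus False using assms(3) by simp
  qed
  have zq: "z \<noteq> q"
  proof
    assume "z = q"
    hence "2 *\<^sub>R p + q = 2 *\<^sub>R q + q" using h3 sc3[of q] by simp
    hence "2 *\<^sub>R p = 2 *\<^sub>R q" by simp
    hence "q = p" by simp
    thus False using assms(3) by simp
  qed
  have "z \<in> convex hull {p, q}" unfolding convex_hull_2 z_def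
    by (rule CollectI, rule exI[of _ "2/3"], rule exI[of _ "1/3"]) simp
  moreover have "convex hull {p,q} \<subseteq> convex hull (Y - {z})"
    by (rule hull_mono) (use assms zp zq in auto)
  ultimately show ?thesis using assms(4) z_def by blast
qed

lemma cen_ok:
  fixes p q r :: "'a::real_vector"
  assumes "p \<in> Y" "q \<in> Y" "r \<in> Y" "p \<noteq> q" "p \<noteq> r" "q \<noteq> r"
    "(1/3) *\<^sub>R p + (1/3) *\<^sub>R q + (1/3) *\<^sub>R r \<in> S"
  shows "\<exists>z\<in>S. z \<in> convex hull (Y - {z})"
proof -
  define z where "z = (1/3) *\<^sub>R p + (1/3) *\<^sub>R q + (1/3) *\<^sub>R r"
  have mid: "a \<in> convex hull (Y - {a})" if "a \<in> Y" "b \<in> Y" "c \<in> Y" "a \<noteq> b" "a \<noteq> c"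
     "2 *\<^sub>R a = b + c" for a b c
  proof -
    have "a = (1/2) *\<^sub>R b + (1/2) *\<^sub>R c"
    proof -
      have "a = (1/2) *\<^sub>R (2 *\<^sub>R a)" by simp
      also have "\<dots> = (1/2) *\<^sub>R b + (1/2) *\<^sub>R c" using that(6) by (simp add: scaleR_add_right)
      finally show ?thesis .
    qed
    hence "a \<in> convex hull {b, c}" unfolding convex_hull_2
      by (intro CollectI exI[of _ "1/2"]) auto
    moreover have "convex hull {b,c} \<subseteq> convex hull (Y - {a})"
      by (rule hull_mono) (use that in auto)
    ultimately show ?thesis by blast
  qed
  show ?thesis
  proof (cases "z = p \<or> z = q \<or> z = r")
    case True
    then show ?thesis
    proof (elim disjE)
      assume zp: "z = p"
      have "2 *\<^sub>R p = q + r"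
      proof -
        have "3 *\<^sub>R z = p + q + r" unfolding z_def by (simp add: scaleR_add_right)
        thus ?thesis using zp sc3' by (simp add: add.assoc)
      qed
      thus ?thesis using mid[of p q r] assms zp z_def by metis
    next
      assume zq: "z = q"
      have "2 *\<^sub>R q = p + r"
      proof -
        have "3 *\<^sub>R z = p + q + r" unfolding z_def by (simp add: scaleR_add_right)
        thus ?thesis using zq sc3'[of q "p + r"] by (simp add: algebra_simps)
      qed
      thus ?thesis using mid[of q p r] assms zq z_def by metis
    next
      assume zr: "z = r"
      have "2 *\<^sub>R r = p + q"
      proof -
        have "3 *\<^sub>R z = p + q + r" unfolding z_def by (simp add: scaleR_add_right)
        thus ?thesis using zr sc3'[of r "p + q"] by (simp add: algebra_simps)
      qed
      thus ?thesis using mid[of r p q] assms zr z_def by metis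
    qed
  next
    case False
    have "z \<in> convex hull {p, q, r}" unfolding convex_hull_3 z_def
      by (intro CollectI exI[of _ "1/3"]) simp
    moreover have "convex hull {p,q,r} \<subseteq> convex hull (Y - {z})"
      by (rule hull_mono) (use assms False in auto)
    ultimately show ?thesis using assms(7) z_def by blast
  qed
qed


lemma tri_case:
  assumes "p \<in> Y" "q \<in> Y" "p \<noteq> q"
    "p = (of_int (3* u+r), of_int (3* v+s))" "q = (of_int (3* u'+r), of_int (3* v'+s))"
    "x mod 3 \<le> 1" "2* u+u'+r = x + 3*k" "y mod 3 \<le> 1" "2* v+v'+s = y + 3*l"
  shows "\<exists>z\<in>A01\<times>A01. z \<in> convex hull (Y - {z})"
proof (rule tri_ok[OF assms(1-3)])
  have e: "(2/3) *\<^sub>R p + (1/3) *\<^sub>R q = (of_int (2* u+u'+r), of_int (2* v+v'+s))"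
    by (simp add: assms(4,5)) (simp add: field_simps)
  have "(2* u+u'+r) mod 3 = x mod 3" using assms(7) by simp
  hence a: "(2* u+u'+r) mod 3 = 0 \<or> (2* u+u'+r) mod 3 = 1" using assms(6) pos_mod_sign[of 3 x] by linarith
  have "(2* v+v'+s) mod 3 = y mod 3" using assms(9) by simp
  hence b: "(2* v+v'+s) mod 3 = 0 \<or> (2* v+v'+s) mod 3 = 1" using assms(8) pos_mod_sign[of 3 y] by linarith
  show "(2/3) *\<^sub>R p + (1/3) *\<^sub>R q \<in> A01 \<times> A01" unfolding e by (simp only: mem_Times_iff fst_conv snd_conv A01_int) (use a b in blast)
qed

lemma cen_case:
  assumes "p \<in> Y" "q \<in> Y" "t \<in> Y" "p \<noteq> q" "p \<noteq> t" "q \<noteq> t"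
    "p = (of_int (3* u+r), of_int (3* v+s))" "q = (of_int (3* u'+r), of_int (3* v'+s))"
    "t = (of_int (3* u''+r), of_int (3* v''+s))"
    "x mod 3 \<le> 1" "u+u'+u''+r = x + 3*k" "y mod 3 \<le> 1" "v+v'+v''+s = y + 3*l"
  shows "\<exists>z\<in>A01\<times>A01. z \<in> convex hull (Y - {z})"
proof (rule cen_ok[OF assms(1-6)])
  have e: "(1/3) *\<^sub>R p + (1/3) *\<^sub>R q + (1/3) *\<^sub>R t = (of_int (u+u'+u''+r), of_int (v+v'+v''+s))"
    by (simp add: assms(7,8,9)) (simp add: field_simps)
  have "(u+u'+u''+r) mod 3 = x mod 3" using assms(11) by simp
  hence a: "(u+u'+u''+r) mod 3 = 0 \<or> (u+u'+u''+r) mod 3 = 1" using assms(10) pos_mod_sign[of 3 x] by linarith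
  have "(v+v'+v''+s) mod 3 = y mod 3" using assms(13) by simp
  hence b: "(v+v'+v''+s) mod 3 = 0 \<or> (v+v'+v''+s) mod 3 = 1" using assms(12) pos_mod_sign[of 3 y] by linarith
  show "(1/3) *\<^sub>R p + (1/3) *\<^sub>R q + (1/3) *\<^sub>R t \<in> A01 \<times> A01" unfolding e by (simp only: mem_Times_iff fst_conv snd_conv A01_int) (use a b in blast)
qed

lemma A01_obt:
  assumes "x \<in> A01"
  obtains k where "x = of_int k" "k mod 3 = 0 \<or> k mod 3 = 1"
  using assms unfolding A01_def by auto

lemma S_point:
  assumes "p \<in> A01 \<times> A01"
  obtains a b where "p = (of_int a, of_int b)" "a mod 3 = 0 \<or> a mod 3 = 1" "b mod 3 = 0 \<or> b mod 3 = 1"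
proof -
  obtain x y where p: "p = (x, y)" by (cases p)
  have x: "x \<in> A01" and y: "y \<in> A01" using assms unfolding p by simp_all
  obtain a where a: "x = of_int a" "a mod 3 = 0 \<or> a mod 3 = 1" using A01_obt[OF x] .
  obtain b where b: "y = of_int b" "b mod 3 = 0 \<or> b mod 3 = 1" using A01_obt[OF y] .
  show ?thesis using that[of a b] p a b by simp
qed
lemma G2_S:
  assumes YS: "Y \<subseteq> A01 \<times> A01" and finY: "finite Y" and cY: "card Y = 9"
  shows "\<exists>z\<in>A01\<times>A01. z \<in> convex hull (Y - {z})"
proof -
  define cls where "cls p = (\<lfloor>fst p\<rfloor> mod 3, \<lfloor>snd p\<rfloor> mod 3)" for p :: "real \<times> real"
  define C4 where "C4 = ({0,1} \<times> {0,1} :: (int \<times> int) set)"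
  have clsC: "cls p \<in> C4" if pY: "p \<in> Y" for p
  proof -
    obtain a b where "p = (of_int a, of_int b)" "a mod 3 = 0 \<or> a mod 3 = 1" "b mod 3 = 0 \<or> b mod 3 = 1"
      by (metis S_point[OF subsetD[OF YS pY]])
    then show ?thesis by (auto simp: cls_def C4_def)
  qed
  have finC: "finite C4" by (simp add: C4_def)
  have cC: "card C4 = 4" by (simp add: C4_def card_cartesian_product)
  have "\<exists>c\<in>C4. 3 \<le> card {p\<in>Y. cls p = c}"
  proof (rule ccontr)
    assume "\<not> (\<exists>c\<in>C4. 3 \<le> card {p\<in>Y. cls p = c})"
    hence le2: "\<And>c. c \<in> C4 \<Longrightarrow> card {p\<in>Y. cls p = c} \<le> 2" by force
    have "Y = (\<Union>c\<in>C4. {p\<in>Y. cls p = c})" using clsC by blast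
    hence "card Y \<le> (\<Sum>c\<in>C4. card {p\<in>Y. cls p = c})" using card_UN_le[OF finC, of "\<lambda>c. {p\<in>Y. cls p = c}"] by simp
    also have "\<dots> \<le> card C4 * 2" using sum_bounded_above[of C4 "\<lambda>c. card {p\<in>Y. cls p = c}" 2] le2 by simp
    finally show False using cC cY by simp
  qed
  then obtain c where "c \<in> C4" and c3: "3 \<le> card {p\<in>Y. cls p = c}" by blast
  then obtain T where TY: "T \<subseteq> {p\<in>Y. cls p = c}" and cT: "card T = 3"
    by (meson obtain_subset_with_card_n)
  then obtain p1 p2 p3 where T: "T = {p1,p2,p3}" and d12: "p1 \<noteq> p2" and d23: "p2 \<noteq> p3" and d13: "p1 \<noteq> p3"
    using card_3_iff by metis
  have p1Y: "p1 \<in> Y" and p2Y: "p2 \<in> Y" and p3Y: "p3 \<in> Y" using TY T by auto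
  have c1: "cls p1 = c" and c2: "cls p2 = c" and c3': "cls p3 = c" using TY T by auto
  obtain a1 b1 where P1: "p1 = (of_int a1, of_int b1)" "a1 mod 3 = 0 \<or> a1 mod 3 = 1" "b1 mod 3 = 0 \<or> b1 mod 3 = 1"
    by (metis S_point[OF subsetD[OF YS p1Y]])
  obtain a2 b2 where P2: "p2 = (of_int a2, of_int b2)"
    by (metis S_point[OF subsetD[OF YS p2Y]])
  obtain a3 b3 where P3: "p3 = (of_int a3, of_int b3)"
    by (metis S_point[OF subsetD[OF YS p3Y]])
  define r where "r = a1 mod 3"
  define s where "s = b1 mod 3"
  have ra: "a2 mod 3 = r" "a3 mod 3 = r" using c1 c2 c3' P1 P2 P3 by (auto simp: cls_def r_def)
  have sb: "b2 mod 3 = s" "b3 mod 3 = s" using c1 c2 c3' P1 P2 P3 by (auto simp: cls_def s_def)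
  define u1 where "u1 = a1 div 3"
  define u2 where "u2 = a2 div 3"
  define u3 where "u3 = a3 div 3"
  define v1 where "v1 = b1 div 3"
  define v2 where "v2 = b2 div 3"
  define v3 where "v3 = b3 div 3"
  have Q1: "p1 = (of_int (3* u1+r), of_int (3* v1+s))" using P1 by (simp add: u1_def v1_def r_def s_def)
  have A2: "a2 = 3 * u2 + r" "b2 = 3 * v2 + s" using ra(1) sb(1) mult_div_mod_eq[of 3 a2] mult_div_mod_eq[of 3 b2]
    by (simp_all add: u2_def v2_def)
  have Q2: "p2 = (of_int (3 * u2+r), of_int (3 * v2+s))" using P2 A2 by metis
  have A3: "a3 = 3 * u3 + r" "b3 = 3 * v3 + s" using ra(2) sb(2) mult_div_mod_eq[of 3 a3] mult_div_mod_eq[of 3 b3]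
    by (simp_all add: u3_def v3_def)
  have Q3: "p3 = (of_int (3 * u3+r), of_int (3 * v3+s))" using P3 A3 by metis
  have rs: "r = 0 \<or> r = 1" "s = 0 \<or> s = 1" using P1 by (auto simp: r_def s_def)
  note K = key1[OF rs, of "u2-u1" "v2-v1" "u3-u1" "v3-v1"]
  note tc = tri_case[where Y=Y]
  note cc = cen_case[where Y=Y]
  from K show ?thesis
  proof (elim disjE conjE)
    assume "(r + (u2 - u1)) mod 3 \<le> 1" "(s + (v2 - v1)) mod 3 \<le> 1"
    then show ?thesis using tc[OF p1Y p2Y d12 Q1 Q2, of "r + (u2 - u1)" u1 "s + (v2 - v1)" v1] by (simp add: algebra_simps)
  next
    assume "(r - (u2 - u1)) mod 3 \<le> 1" "(s - (v2 - v1)) mod 3 \<le> 1"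
    then show ?thesis using tc[OF p2Y p1Y d12[symmetric] Q2 Q1, of "r - (u2 - u1)" u2 "s - (v2 - v1)" v2] by (simp add: algebra_simps)
  next
    assume "(r + (u3 - u1)) mod 3 \<le> 1" "(s + (v3 - v1)) mod 3 \<le> 1"
    then show ?thesis using tc[OF p1Y p3Y d13 Q1 Q3, of "r + (u3 - u1)" u1 "s + (v3 - v1)" v1] by (simp add: algebra_simps)
  next
    assume "(r - (u3 - u1)) mod 3 \<le> 1" "(s - (v3 - v1)) mod 3 \<le> 1"
    then show ?thesis using tc[OF p3Y p1Y d13[symmetric] Q3 Q1, of "r - (u3 - u1)" u3 "s - (v3 - v1)" v3] by (simp add: algebra_simps)
  next
    assume "(r + (u3 - u1) - (u2 - u1)) mod 3 \<le> 1" "(s + (v3 - v1) - (v2 - v1)) mod 3 \<le> 1"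
    then show ?thesis using tc[OF p2Y p3Y d23 Q2 Q3, of "r + (u3 - u1) - (u2 - u1)" u2 "s + (v3 - v1) - (v2 - v1)" v2] by (simp add: algebra_simps)
  next
    assume "(r + (u2 - u1) - (u3 - u1)) mod 3 \<le> 1" "(s + (v2 - v1) - (v3 - v1)) mod 3 \<le> 1"
    then show ?thesis using tc[OF p3Y p2Y d23[symmetric] Q3 Q2, of "r + (u2 - u1) - (u3 - u1)" u3 "s + (v2 - v1) - (v3 - v1)" v3] by (simp add: algebra_simps)
  next
    assume "(r + (u2 - u1) + (u3 - u1)) mod 3 \<le> 1" "(s + (v2 - v1) + (v3 - v1)) mod 3 \<le> 1"
    then show ?thesis using cc[OF p1Y p2Y p3Y d12 d13 d23 Q1 Q2 Q3, of "r + (u2 - u1) + (u3 - u1)" u1 "s + (v2 - v1) + (v3 - v1)" v1] by (simp add: algebra_simps)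
  qed
qed

definition tp :: "nat \<Rightarrow> real \<times> real" where
  "tp i = [(0,0),(1,0),(3,1),(6,3),(7,4),(6,4),(4,3),(1,1)] ! i"
definition du :: "nat \<Rightarrow> int" where "du i = [-1,1,3,3,1,-1,-3,-3] ! i"
definition dv :: "nat \<Rightarrow> int" where "dv i = [0,-3,-5,-4,0,3,5,4] ! i"
definition dc :: "nat \<Rightarrow> int" where "dc i = [-1,0,3,5,6,5,2,0] ! i"
definition dh :: "nat \<Rightarrow> (real \<times> real) set" where
  "dh i = {p. of_int (du i) * fst p + of_int (dv i) * snd p \<le> of_int (dc i)}"

lemma lt8: "i < (8::nat) \<Longrightarrow> i = 0 \<or> i = 1 \<or> i = 2 \<or> i = 3 \<or> i = 4 \<or> i = 5 \<or> i = 6 \<or> i = 7"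
  by arith

lemma dh_conv: "convex (dh i)"
proof -
  have "dh i = {p. inner (of_int (du i), of_int (dv i)) p \<le> of_int (dc i)}"
    by (auto simp: dh_def inner_prod_def)
  then show ?thesis using convex_halfspace_le by simp
qed

lemma tp_in: "i < 8 \<Longrightarrow> j < 8 \<Longrightarrow> j \<noteq> i \<Longrightarrow> tp j \<in> dh i"
  by (drule lt8, drule lt8) (auto simp: tp_def dh_def du_def dv_def dc_def)

lemma tp_out: "i < 8 \<Longrightarrow> tp i \<notin> dh i"
  by (drule lt8) (auto simp: tp_def dh_def du_def dv_def dc_def)

lemma A01_nums: "(0::real) \<in> A01" "(1::real) \<in> A01" "(3::real) \<in> A01" "(4::real) \<in> A01"
  "(6::real) \<in> A01" "(7::real) \<in> A01"
  using A01_int[of 0] A01_int[of 1] A01_int[of 3] A01_int[of 4] A01_int[of 6] A01_int[of 7] by simp_all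

lemma tp_S: "i < 8 \<Longrightarrow> tp i \<in> A01 \<times> A01"
  by (drule lt8) (auto simp: tp_def A01_nums)

lemma int_ineq:
  fixes a b c m n :: int
  assumes "real_of_int a * real_of_int m + real_of_int b * real_of_int n \<le> real_of_int c"
  shows "a * m + b * n \<le> c"
proof -
  have "real_of_int (a * m + b * n) \<le> real_of_int c" using assms by simp
  then show ?thesis by (simp only: of_int_le_iff)
qed

lemma empt: fixes m n :: int
  assumes "m mod 3 = 0 \<or> m mod 3 = 1" "n mod 3 = 0 \<or> n mod 3 = 1"
  "-m \<le> -1" "m - 3*n \<le> 0" "3*m - 5*n \<le> 3" "3*m-4*n \<le> 5" "m \<le> 6" "-m+3*n \<le> 5" "-3*m+5*n \<le> 2" "-3*m+4*n\<le>0"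
  shows False
proof -
  have "m = 1 \<or> m = 2 \<or> m = 3 \<or> m = 4 \<or> m = 5 \<or> m = 6" using assms(3,7) by linarith
  moreover have "n \<ge> 1 \<and> n \<le> 3" using assms by linarith
  hence "n = 1 \<or> n = 2 \<or> n = 3" by linarith
  ultimately show False using assms by (elim disjE) simp_all
qed

lemma dh_empty:
  assumes "p \<in> A01 \<times> A01" "\<And>i. i < 8 \<Longrightarrow> p \<in> dh i"
  shows False
proof -
  obtain m n where p: "p = (of_int m, of_int n)" and m: "m mod 3 = 0 \<or> m mod 3 = 1"
    and n: "n mod 3 = 0 \<or> n mod 3 = 1"
    using S_point[OF assms(1)] by metis
  have h: "du i * m + dv i * n \<le> dc i" if "i < 8" for i
    using assms(2)[OF that] by (intro int_ineq) (simp add: dh_def p)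
  have h0: "-m \<le> -1" using h[of 0] by (simp add: du_def dv_def dc_def)
  have h1: "m - 3*n \<le> 0" using h[of 1] by (simp add: du_def dv_def dc_def)
  have h2: "3*m - 5*n \<le> 3" using h[of 2] by (simp add: du_def dv_def dc_def)
  have h3: "3*m - 4*n \<le> 5" using h[of 3] by (simp add: du_def dv_def dc_def)
  have h4: "m \<le> 6" using h[of 4] by (simp add: du_def dv_def dc_def)
  have h5: "-m + 3*n \<le> 5" using h[of 5] by (simp add: du_def dv_def dc_def)
  have h6: "-3*m + 5*n \<le> 2" using h[of 6] by (simp add: du_def dv_def dc_def)
  have h7: "-3*m + 4*n \<le> 0" using h[of 7] by (simp add: du_def dv_def dc_def)
  show False using empt[OF m n h0 h1 h2 h3 h4 h5 h6 h7] .
qed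

lemma not_helly7: "\<not> helly_prop (A01 \<times> A01 :: (real \<times> real) set) 7"
proof
  assume hp: "helly_prop (A01 \<times> A01 :: (real \<times> real) set) 7"
  define Cs where "Cs i = convex hull (tp ` ({..<8} - {i}))" for i
  define F where "F = Cs ` {..<8}"
  have Cs_sub: "Cs i \<subseteq> dh i" if "i < 8" for i
  proof -
    have "tp ` ({..<8} - {i}) \<subseteq> dh i" using tp_in[OF that] by blast
    then show ?thesis unfolding Cs_def by (rule hull_minimal) (rule dh_conv)
  qed
  have tp_Cs: "tp i \<in> Cs j" if "i < 8" "j < 8" "i \<noteq> j" for i j
    unfolding Cs_def by (rule hull_inc, rule imageI) (use that in simp)
  have tp_nCs: "tp i \<notin> Cs i" if "i < 8" for i
    using Cs_sub[OF that] tp_out[OF that] by blast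
  have inj: "inj_on Cs {..<8}"
  proof (rule inj_onI)
    fix i j assume i: "i \<in> {..<8::nat}" and j: "j \<in> {..<8::nat}" and e: "Cs i = Cs j"
    show "i = j"
    proof (rule ccontr)
      assume "i \<noteq> j"
      hence "tp i \<in> Cs j" using tp_Cs[of i j] i j by simp
      thus False using tp_nCs[of i] i e by simp
    qed
  qed
  have cF: "card F = 8" unfolding F_def using card_image[OF inj] by simp
  have finF: "finite F" unfolding F_def by simp
  have cvx: "\<forall>C\<in>F. convex C" unfolding F_def Cs_def by (auto simp: convex_convex_hull)
  have sm: "\<forall>G\<subseteq>F. card G \<le> 7 \<longrightarrow> \<Inter>G \<inter> (A01 \<times> A01) \<noteq> {}"
  proof (intro allI impI)
    fix G assume GF: "G \<subseteq> F" and cG: "card G \<le> 7"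
    have "\<not> F \<subseteq> G"
    proof
      assume "F \<subseteq> G"
      hence "card F \<le> card G" by (rule card_mono[OF finite_subset[OF GF finF]])
      thus False using cF cG by simp
    qed
    then obtain C where CF: "C \<in> F" and CG: "C \<notin> G" by blast
    from CF obtain i where i: "i < 8" and Ci: "C = Cs i" unfolding F_def by blast
    have tpG: "tp i \<in> \<Inter>G"
    proof
      fix D assume D: "D \<in> G"
      hence "D \<in> F" using GF by blast
      then obtain j where j: "j < 8" and Dj: "D = Cs j" unfolding F_def by blast
      have "i \<noteq> j" using CG Ci D Dj by blast
      thus "tp i \<in> D" using tp_Cs[of i j] i j Dj by simp
    qed
    show "\<Inter>G \<inter> (A01 \<times> A01) \<noteq> {}" using tpG tp_S[OF i] by (metis IntI empty_iff)
  qed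
  have emp: "\<Inter>F \<inter> (A01 \<times> A01) = {}"
  proof (rule ccontr)
    assume "\<Inter>F \<inter> (A01 \<times> A01) \<noteq> {}"
    then obtain p where pF: "p \<in> \<Inter>F" and pS: "p \<in> A01 \<times> A01" by blast
    have "p \<in> dh i" if "i < 8" for i
    proof -
      have "Cs i \<in> F" unfolding F_def using that by simp
      hence "p \<in> Cs i" using pF by (rule InterD[rotated])
      thus ?thesis using Cs_sub[OF that] by (rule subsetD[rotated])
    qed
    thus False using dh_empty[OF pS] by blast
  qed
  have "\<Inter>F \<inter> (A01 \<times> A01) \<noteq> {}"
    using hp[unfolded helly_prop_def, rule_format, of F] finF cvx sm by simp
  then show False using emp by simp
qed

theorem proposition10:
  shows "helly_number (A01 \<times> A01 :: (real \<times> real) set) = 8"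
proof -
  have D: "\<forall>Y. Y \<subseteq> A01 \<times> A01 \<and> finite Y \<and> card Y = 9 \<and> card ((A01 \<times> A01) \<inter> convex hull Y) = N
           \<longrightarrow> (\<exists>w\<in>A01 \<times> A01. \<forall>y\<in>Y. w \<in> convex hull (Y - {y}))" for N
    by (rule descent[OF fin_S G2_S])
  have h8: "helly_prop (A01 \<times> A01 :: (real \<times> real) set) 8"
  proof (rule helly_from_indep)
    fix Y :: "(real \<times> real) set" assume a: "Y \<subseteq> A01 \<times> A01" "finite Y" "card Y = Suc 8"
    show "\<exists>w\<in>A01 \<times> A01. \<forall>y\<in>Y. w \<in> convex hull (Y - {y})"
      using D[of "card ((A01 \<times> A01) \<inter> convex hull Y)"] a by simp
  qed
  have least: "(LEAST h. helly_prop (A01 \<times> A01 :: (real \<times> real) set) h) = 8"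
  proof (rule Least_equality)
    show "helly_prop (A01 \<times> A01 :: (real \<times> real) set) 8" by (rule h8)
  next
    fix y assume hy: "helly_prop (A01 \<times> A01 :: (real \<times> real) set) y"
    show "8 \<le> y"
    proof (rule ccontr)
      assume "\<not> 8 \<le> y"
      hence "y \<le> 7" by simp
      hence "helly_prop (A01 \<times> A01 :: (real \<times> real) set) 7" using helly_mono hy by blast
      thus False using not_helly7 by blast
    qed
  qed
  show ?thesis unfolding helly_number_def using h8 least by (auto simp: enat_numeral)
qed

end
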